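(* In the setting described in the context, the probability $\Pr(y)=|\phi_k(y)|^2$ of observing $y\in\{0,1,\dots,N-1\}$ after the Amplified-QFT is given exactly by: (A) if $y=0$: $\Pr(y)=\cos^2(2k\theta)$; (B) if $Py\equiv 0 \pmod N$ and $y\neq 0$: $\Pr(y)=\tan^2\theta\,\sin^2(2k\theta)$; (C) if $Py\not\equiv 0\pmod N$ and $MPy\not\equiv 0 \pmod N$: $\Pr(y)=\dfrac{1}{M^2}\tan^2\theta\,\sin^2(2k\theta)\,\dfrac{\sin^2(\pi MPy/N)}{\sin^2(\pi Py/N)}$; (D) if $Py\not\equiv 0\pmod N$ and $MPy\equiv 0\pmod N$: $\Pr(y)=0$.
   Context: Setting: $N\ge 2$ is an integer, $\mathcal L=\{0,1,\dots,N-1\}$, and $s\ge 0$, $P\ge 1$, $M\ge 1$ are integers with $M<N$ and $s+(M-1)P\le N-1$; $A=\{s+rP: r=0,1,\dots,M-1\}\subset\mathcal L$ (so $|A|=M$). Let $\omega=e^{-2\pi i/N}$. Let $\theta\in(0,\pi/2)$ be defined by $\sin\theta=\sqrt{M/N}$ (so $\cos\theta=\sqrt{1-M/N}$), and $k=\lfloor \pi/(4\theta)\rfloor$. Put $a_k=\frac{1}{\sqrt M}\sin((2k+1)\theta)$, $b_k=\frac{1}{\sqrt{N-M}}\cos((2k+1)\theta)$, and let $\psi_k\in\mathbb C^N$ be the state with $\psi_k(z)=a_k$ for $z\in A$ and $\psi_k(z)=b_k$ for $z\notin A$ (this is the state produced by $k$ Grover iterations for the marked set $A$). The quantum Fourier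 transform is applied: $\phi_k(y)=\frac{1}{\sqrt N}\sum_{z=0}^{N-1}\psi_k(z)\omega^{zy}$, and $\Pr(y)=|\phi_k(y)|^2$. *)

theory Defs
  imports "HOL-Analysis.Analysis"
begin

definition grover_theta :: "nat \<Rightarrow> nat \<Rightarrow> real" where
  "grover_theta N M = arcsin (sqrt (real M / real N))"

definition grover_k :: "nat \<Rightarrow> nat \<Rightarrow> nat" where
  "grover_k N M = nat \<lfloor>pi / (4 * grover_theta N M)\<rfloor>"

definition marked_set :: "nat \<Rightarrow> nat \<Rightarrow> nat \<Rightarrow> nat set" where
  "marked_set s P M = {s + r * P | r. r < M}"

definition grover_state :: "nat \<Rightarrow> nat \<Rightarrow> nat \<Rightarrow> nat \<Rightarrow> nat \<Rightarrow> complex" where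
  "grover_state N s P M z =
     (let \<theta> = grover_theta N M; k = grover_k N M in
      if z \<in> marked_set s P M
      then complex_of_real (sin ((2 * real k + 1) * \<theta>) / sqrt (real M))
      else complex_of_real (cos ((2 * real k + 1) * \<theta>) / sqrt (real N - real M)))"

definition qft_omega :: "nat \<Rightarrow> complex" where
  "qft_omega N = cis (- 2 * pi / real N)"

definition amplified_qft :: "nat \<Rightarrow> nat \<Rightarrow> nat \<Rightarrow> nat \<Rightarrow> nat \<Rightarrow> complex" where
  "amplified_qft N s P M y =
     (1 / complex_of_real (sqrt (real N))) *
       (\<Sum>z<N. grover_state N s P M z * qft_omega N ^ (z * y))"

definition aqft_prob :: "nat \<Rightarrow> nat \<Rightarrow> nat \<Rightarrow> nat \<Rightarrow> nat \<Rightarrow> real" where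
  "aqft_prob N s P M y = (cmod (amplified_qft N s P M y))\<^sup>2"

end

theory Submission
  imports Defs
begin


lemma omega_pow: "qft_omega N ^ n = cis (- 2 * pi * real n / real N)"
proof -
  have "qft_omega N ^ n = cis (real n * (- 2 * pi / real N))" unfolding qft_omega_def Complex.DeMoivre ..
  also have "real n * (- 2 * pi / real N) = - 2 * pi * real n / real N" by simp
  finally show ?thesis .
qed

lemma omega_pow_eq1: assumes "N > 0" shows "qft_omega N ^ n = 1 \<longleftrightarrow> n mod N = 0"
proof
  assume h: "qft_omega N ^ n = 1"
  hence "cos (- 2 * pi * real n / real N) = 1" unfolding omega_pow
    by (metis Re_complex_of_real cis.sel(1) of_real_1)
  then obtain j :: int where j: "- 2 * pi * real n / real N = real_of_int j * 2 * pi"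
    using cos_one_2pi_int by blast
  hence "pi * real n = pi * (- real_of_int j * real N)" using assms by (simp add: field_simps)
  hence "pi * (real n + real_of_int j * real N) = 0" by (simp add: algebra_simps)
  hence "real n = - real_of_int j * real N" by simp
  hence "int n = - j * int N" by (metis of_int_eq_iff of_int_minus of_int_mult of_int_of_nat_eq)
  hence "int N dvd int n" by simp
  thus "n mod N = 0" by presburger
next
  assume "n mod N = 0"
  then obtain q where q: "n = N * q" by blast
  have "qft_omega N ^ n = cis (2 * pi * real_of_int (- int q))"
    unfolding omega_pow q using assms by (simp add: field_simps)
  also have "\<dots> = 1" by (rule cis_multiple_2pi) simp
  finally show "qft_omega N ^ n = 1" .
qed

lemma norm_one_minus_cis: "(cmod (1 - cis x))^2 = 4 * (sin (x/2))^2"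
proof -
  have "(cmod (1 - cis x))^2 = (1 - cos x)^2 + (sin x)^2"
    by (simp add: cmod_power2)
  also have "\<dots> = 2 - 2 * cos x" by (simp add: power2_eq_square algebra_simps sin_squared_eq)
  also have "cos x = 1 - 2 * (sin (x/2))^2" using cos_double_sin[of "x/2"] by simp
  finally show ?thesis by simp
qed

lemma geom_norm:
  "(cmod (\<Sum>r<M. cis x ^ r))^2 =
    (if cis x = 1 then (real M)^2 else (sin (real M * x / 2))^2 / (sin (x/2))^2)"
proof (cases "cis x = 1")
  case True thus ?thesis by simp
next
  case False
  have "(\<Sum>r<M. cis x ^ r) = (1 - cis (real M * x)) / (1 - cis x)"
    using sum_gp_strict[of "cis x" M] False by (simp add: Complex.DeMoivre)
  hence "(cmod (\<Sum>r<M. cis x ^ r))^2 = (cmod (1 - cis (real M * x)))^2 / (cmod (1 - cis x))^2"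
    by (simp add: norm_divide power_divide)
  also have "\<dots> = (sin (real M * x / 2))^2 / (sin (x/2))^2"
    by (simp add: norm_one_minus_cis)
  finally show ?thesis using False by simp
qed



lemma alg:
  fixes m n t :: real and k :: nat
  assumes mn: "0 < m" "m < n" and st: "sin t = sqrt (m/n)" and ct: "cos t = sqrt ((n-m)/n)"
  defines "a \<equiv> sin ((2 * real k + 1) * t) / sqrt m"
    and "b \<equiv> cos ((2 * real k + 1) * t) / sqrt (n - m)"
  shows "(b * n + (a - b) * m) / sqrt n = cos (2 * real k * t)"
    and "(a - b)^2 / n = (tan t)^2 * (sin (2 * real k * t))^2 / m^2"
proof -
  define al where "al = (2 * real k + 1) * t"
  have n0: "n > 0" using mn by simp
  have sm: "sqrt m = sqrt n * sin t" using st n0 by (simp add: real_sqrt_divide)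
  have snm: "sqrt (n - m) = sqrt n * cos t" using ct n0 by (simp add: real_sqrt_divide)
  have sn: "sqrt n > 0" using n0 by simp
  have sinp: "sin t > 0" using st mn by simp
  have cosp: "cos t > 0" using ct mn by simp
  have diff: "al - t = 2 * real k * t" unfolding al_def by (simp add: algebra_simps)
  have sqm: "sqrt m * sqrt m = m" "sqrt m > 0" using mn by simp_all
  have sqnm: "sqrt (n-m) * sqrt (n-m) = n - m" "sqrt (n-m) > 0" using mn by simp_all
  have am: "a * m = sin al * sqrt m" unfolding a_def al_def[symmetric]
    by (metis sqm mult.assoc nonzero_mult_div_cancel_left order_less_irrefl times_divide_eq_left mult.commute)
  have bnm: "b * (n - m) = cos al * sqrt (n - m)" unfolding b_def al_def[symmetric]
    by (metis sqnm mult.assoc nonzero_mult_div_cancel_left order_less_irrefl times_divide_eq_left mult.commute)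
  have "(b * n + (a - b) * m) = a * m + b * (n - m)" by (simp add: algebra_simps)
  also have "\<dots> = sqrt n * (sin al * sin t + cos al * cos t)" using am bnm sm snm
    by (simp add: algebra_simps)
  also have "sin al * sin t + cos al * cos t = cos (al - t)" by (simp add: cos_diff)
  finally show "(b * n + (a - b) * m) / sqrt n = cos (2 * real k * t)" using sn diff by simp
  have "a - b = (sin al * cos t - cos al * sin t) / (sqrt n * sin t * cos t)"
    unfolding a_def b_def al_def[symmetric] sm snm using sn sinp cosp
    by (simp add: field_simps)
  also have "sin al * cos t - cos al * sin t = sin (2 * real k * t)"
    by (simp add: sin_diff[symmetric] diff)
  finally have ab: "a - b = sin (2 * real k * t) / (sqrt n * sin t * cos t)" .
  have mm: "m = n * (sin t)^2" using st n0 mn by simp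
  show "(a - b)^2 / n = (tan t)^2 * (sin (2 * real k * t))^2 / m^2"
    unfolding ab mm tan_def using sn sinp cosp n0
    by (simp add: field_simps power2_eq_square)
qed



theorem mainTheorem1:
  fixes N s P M y :: nat
  assumes "N \<ge> 2" and "P \<ge> 1" and "M \<ge> 1" and "M < N"
    and "s + (M - 1) * P \<le> N - 1" and "y < N"
  defines "\<theta> \<equiv> grover_theta N M" and "k \<equiv> grover_k N M"
  shows "(y = 0 \<longrightarrow> aqft_prob N s P M y = (cos (2 * real k * \<theta>))\<^sup>2)
    \<and> ((P * y) mod N = 0 \<and> y \<noteq> 0 \<longrightarrow>
         aqft_prob N s P M y = (tan \<theta>)\<^sup>2 * (sin (2 * real k * \<theta>))\<^sup>2)
    \<and> ((P * y) mod N \<noteq> 0 \<and> (M * P * y) mod N \<noteq> 0 \<longrightarrow>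
         aqft_prob N s P M y = 1 / (real M)\<^sup>2 * (tan \<theta>)\<^sup>2 * (sin (2 * real k * \<theta>))\<^sup>2
           * (sin (pi * real (M * P * y) / real N))\<^sup>2 / (sin (pi * real (P * y) / real N))\<^sup>2)
    \<and> ((P * y) mod N \<noteq> 0 \<and> (M * P * y) mod N = 0 \<longrightarrow> aqft_prob N s P M y = 0)"
  proof -
  have N0: "N > 0" "real N > 0" using assms(1) by auto
  define A where "A = marked_set s P M"
  define al where "al = (2 * real k + 1) * \<theta>"
  define a where "a = sin al / sqrt (real M)"
  define b where "b = cos al / sqrt (real N - real M)"
  define \<omega> where "\<omega> = qft_omega N"
  have mN: "0 \<le> real M / real N" "real M / real N \<le> 1" using assms N0 by auto
  have sq: "-1 \<le> sqrt (real M / real N)" "sqrt (real M / real N) \<le> 1"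
    using mN by (simp_all add: order_trans[of "-1" 0])
  have st: "sin \<theta> = sqrt (real M / real N)" unfolding \<theta>_def grover_theta_def
    using sq by (intro sin_arcsin)
  have ct: "cos \<theta> = sqrt ((real N - real M) / real N)"
  proof -
    have "cos (arcsin (sqrt (real M / real N))) = sqrt (1 - (sqrt (real M / real N))^2)"
      using sq by (intro cos_arcsin)
    also have "\<dots> = sqrt ((real N - real M) / real N)" using mN N0 by (simp add: diff_divide_distrib)
    finally show ?thesis by (simp add: \<theta>_def grover_theta_def)
  qed
  have gs: "grover_state N s P M z = complex_of_real (if z \<in> A then a else b)" for z
    unfolding grover_state_def A_def a_def b_def al_def \<theta>_def k_def Let_def by simp
  have Aim: "A = (\<lambda>r. s + r * P) ` {..<M}" unfolding A_def marked_set_def by auto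
  have inj: "inj_on (\<lambda>r. s + r * P) {..<M}" using assms(2) by (auto simp: inj_on_def)
  have Asub: "A \<subseteq> {..<N}"
  proof
    fix z assume "z \<in> A"
    then obtain r where r: "r < M" "z = s + r * P" using Aim by auto
    have "r \<le> M - 1" using r by linarith
    hence "r * P \<le> (M - 1) * P" by (rule mult_le_mono1)
    hence "z \<le> N - 1" using r assms(5) by linarith
    thus "z \<in> {..<N}" using N0 by simp
  qed
  have sumsplit: "(\<Sum>z<N. grover_state N s P M z * \<omega> ^ (z * y)) =
      of_real b * (\<Sum>z<N. \<omega> ^ (z * y)) + of_real (a - b) * (\<Sum>z\<in>A. \<omega> ^ (z * y))"
  proof -
    have "(\<Sum>z<N. grover_state N s P M z * \<omega> ^ (z * y)) =
       (\<Sum>z<N. of_real b * \<omega> ^ (z * y) + (if z \<in> A then of_real (a - b) * \<omega> ^ (z * y) else 0))"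
      by (rule sum.cong) (auto simp: gs algebra_simps)
    also have "\<dots> = of_real b * (\<Sum>z<N. \<omega> ^ (z * y)) + (\<Sum>z\<in>{..<N} \<inter> A. of_real (a - b) * \<omega> ^ (z * y))"
      by (simp only: sum.distrib sum_distrib_left sum.inter_restrict[OF finite_lessThan])
    also have "{..<N} \<inter> A = A" using Asub by auto
    finally show ?thesis by (simp add: sum_distrib_left)
  qed
  have SA: "(\<Sum>z\<in>A. \<omega> ^ (z * y)) = \<omega> ^ (s * y) * (\<Sum>r<M. (\<omega> ^ (P * y)) ^ r)"
  proof -
    have "(\<Sum>z\<in>A. \<omega> ^ (z * y)) = (\<Sum>r<M. \<omega> ^ ((s + r * P) * y))"
      unfolding Aim by (simp add: sum.reindex[OF inj])
    also have "\<dots> = (\<Sum>r<M. \<omega> ^ (s * y) * (\<omega> ^ (P * y)) ^ r)"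
    proof (rule sum.cong)
      fix r
      have "(s + r * P) * y = s * y + (P * y) * r" by (simp add: algebra_simps)
      thus "\<omega> ^ ((s + r * P) * y) = \<omega> ^ (s * y) * (\<omega> ^ (P * y)) ^ r"
        by (simp add: power_add power_mult)
    qed simp
    finally show ?thesis by (simp add: sum_distrib_left)
  qed
  have SN: "(\<Sum>z<N. \<omega> ^ (z * y)) = (if y = 0 then of_nat N else 0)"
  proof (cases "y = 0")
    case True thus ?thesis by simp
  next
    case False
    have ne: "\<omega> ^ y \<noteq> 1" unfolding \<omega>_def using omega_pow_eq1[OF N0(1), of y] False assms(6) by simp
    have one: "(\<omega> ^ y) ^ N = 1" unfolding \<omega>_def power_mult[symmetric]
      using omega_pow_eq1[OF N0(1), of "y * N"] by simp
    have "(\<Sum>z<N. \<omega> ^ (z * y)) = (\<Sum>z<N. (\<omega> ^ y) ^ z)"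
      by (simp add: power_mult[symmetric] mult.commute)
    also have "\<dots> = 0" using sum_gp_strict[of "\<omega> ^ y" N] ne one by simp
    finally show ?thesis using False by simp
  qed
  have prob: "aqft_prob N s P M y = (cmod ((1 / complex_of_real (sqrt (real N))) *
      (of_real b * (\<Sum>z<N. \<omega> ^ (z * y)) + of_real (a - b) * (\<Sum>z\<in>A. \<omega> ^ (z * y)))))^2"
    unfolding aqft_prob_def amplified_qft_def sumsplit[unfolded \<omega>_def] \<omega>_def ..
  have Mlt: "0 < real M" "real M < real N" using assms by auto
  note alg1 = alg(1)[OF Mlt st ct, of k, folded al_def, folded a_def b_def]
  note alg2 = alg(2)[OF Mlt st ct, of k, folded al_def, folded a_def b_def]
  define x where "x = - 2 * pi * real (P * y) / real N"
  have wP: "\<omega> ^ (P * y) = cis x" unfolding \<omega>_def x_def omega_pow ..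
  have nws: "cmod (\<omega> ^ (s * y)) = 1" unfolding \<omega>_def omega_pow by simp
  have yne: "aqft_prob N s P M y = (a - b)^2 / real N * (cmod (\<Sum>r<M. cis x ^ r))^2" if "y \<noteq> 0"
  proof -
    have "aqft_prob N s P M y = (cmod (complex_of_real ((a - b) / sqrt (real N)) * \<omega> ^ (s * y) * (\<Sum>r<M. cis x ^ r)))^2"
      unfolding prob SN SA wP using that by (simp add: algebra_simps diff_divide_distrib)
    also have "\<dots> = ((a - b) / sqrt (real N))^2 * (cmod (\<Sum>r<M. cis x ^ r))^2"
      by (simp only: norm_mult norm_of_real nws mult_1_right power_mult_distrib power2_abs)
    also have "((a - b) / sqrt (real N))^2 = (a - b)^2 / real N" using N0 by (simp add: power_divide)
    finally show ?thesis .
  qed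
  have sinx: "(sin (real M * x / 2))^2 = (sin (pi * real (M * P * y) / real N))^2"
  proof -
    have "real M * x / 2 = - (pi * real (M * P * y) / real N)" unfolding x_def by simp
    thus ?thesis by simp
  qed
  have sinx1: "(sin (x / 2))^2 = (sin (pi * real (P * y) / real N))^2"
  proof -
    have "x / 2 = - (pi * real (P * y) / real N)" unfolding x_def by simp
    thus ?thesis by simp
  qed
  have cx: "cis x = 1 \<longleftrightarrow> (P * y) mod N = 0"
    using omega_pow_eq1[OF N0(1), of "P * y"] wP unfolding \<omega>_def by simp
  show ?thesis
  proof (intro conjI impI)
    assume y0: "y = 0"
    have "aqft_prob N s P M y = (cmod (complex_of_real ((b * real N + (a - b) * real M) / sqrt (real N))))^2"
      unfolding prob SN using y0 Aim inj by (simp add: card_image algebra_simps add_divide_distrib diff_divide_distrib)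
    thus "aqft_prob N s P M y = (cos (2 * real k * \<theta>))\<^sup>2" unfolding alg1 by simp
  next
    assume h: "P * y mod N = 0 \<and> y \<noteq> 0"
    thus "aqft_prob N s P M y = (tan \<theta>)\<^sup>2 * (sin (2 * real k * \<theta>))\<^sup>2"
      using yne geom_norm[of x M] cx alg2 Mlt by (simp add: field_simps)
  next
    assume h: "P * y mod N \<noteq> 0 \<and> M * P * y mod N \<noteq> 0"
    hence "y \<noteq> 0" by (metis mult_0_right mod_0)
    thus "aqft_prob N s P M y = 1 / (real M)\<^sup>2 * (tan \<theta>)\<^sup>2 * (sin (2 * real k * \<theta>))\<^sup>2
           * (sin (pi * real (M * P * y) / real N))\<^sup>2 / (sin (pi * real (P * y) / real N))\<^sup>2"
      using yne geom_norm[of x M] cx alg2 h sinx sinx1 by simp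
  next
    assume h: "P * y mod N \<noteq> 0 \<and> M * P * y mod N = 0"
    hence y: "y \<noteq> 0" by (metis mult_0_right mod_0)
    have "cis (real M * x) = 1"
    proof -
      have "cis (real M * x) = cis x ^ M" by (simp add: Complex.DeMoivre)
      also have "\<dots> = \<omega> ^ (M * P * y)" unfolding wP[symmetric] power_mult[symmetric]
        by (simp add: mult.commute mult.left_commute)
      also have "\<dots> = 1" unfolding \<omega>_def using omega_pow_eq1[OF N0(1)] h by simp
      finally show ?thesis .
    qed
    hence "sin (real M * x / 2) = 0"
      using norm_one_minus_cis[of "real M * x"] by simp
    thus "aqft_prob N s P M y = 0" using yne[OF y] geom_norm[of x M] cx h by simp
  qed
qed

end
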